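(* Let $d\ge 1$ and let $p_0=\mathcal N(\mu_0,\Sigma)$ be a Gaussian density on $\mathbb{R}^d$ with $\Sigma\succ 0$, so that $s_0(x)=\nabla_x\log p_0(x)=-\Sigma^{-1}(x-\mu_0)$. Fix $t>0$ and $y\in\mathbb{R}^d$, and let $x_0^1,\dots,x_0^{N_{\mathrm{ref}}}$ be i.i.d. samples from $p_0$. Define the weights $$w_i:=p_{t|0}(y\mid x_0^i)=\mathcal N\big(y;\,e^{-t}x_0^i,\,(1-e^{-2t})I\big),\qquad \tilde w_i:=\frac{w_i}{\sum_{j=1}^{N_{\mathrm{ref}}}w_j},$$ the estimators $$\widehat s_{\mathrm{TSI}}(y,t)=e^{t}\sum_{i=1}^{N_{\mathrm{ref}}}\tilde w_i\,s_0(x_0^i),\qquad \widehat s_{\mathrm{TWD}}(y,t)=-\frac{1}{1-e^{-2t}}\sum_{i=1}^{N_{\mathrm{ref}}}\tilde w_i\,\big(y-e^{-t}x_0^i\big),$$ and $$\hat\mu_{\mathrm{SNIS}}:=\sum_{i=1}^{N_{\mathrm{ref}}}\tilde w_i x_0^i,\qquad \mu:=\mathbb{E}_{p_0}[\hat\mu_{\mathrm{SNIS}}],\qquad \Delta:=\hat\mu_{\mathrm{SNIS}}-\mu,$$ where $\mathbb{E}_{p_0}$ denotes expectation over the i.i.d. reference samples. Then the deviations $$\varepsilon_{\mathrm C}:=\widehat s_{\mathrm{TSI}}-\mathbb{E}_{p_0}[\widehat s_{\mathrm{TSI}}],\qquad \varepsilon_{\mathrm T}:=\widehat s_{\mathrm{TWD}}-\mathbb{E}_{p_0}[\widehat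 s_{\mathrm{TWD}}]$$ satisfy $\varepsilon_{\mathrm C}=-e^{t}\Sigma^{-1}\Delta$ and $\varepsilon_{\mathrm T}=\frac{e^{-t}}{1-e^{-2t}}\Delta$, and hence $$\operatorname{Tr}\big[\mathrm{Cov}_{p_0}(\varepsilon_{\mathrm C},\varepsilon_{\mathrm T})\big]=\mathbb{E}_{p_0}\big[\varepsilon_{\mathrm T}^{\top}\varepsilon_{\mathrm C}\big]=-\frac{1}{1-e^{-2t}}\,\mathbb{E}_{p_0}\big[\Delta^{\top}\Sigma^{-1}\Delta\big]\le 0,$$ with equality if and only if $\Delta=0$ almost surely.
   Context: $p_{t|0}(\cdot\mid x_0)$ is the transition density of the Ornstein–Uhlenbeck process $dX_t=-X_t\,dt+\sqrt2\,dW_t$, i.e. $p_{t|0}(x_t\mid x_0)=\mathcal N(x_t;e^{-t}x_0,(1-e^{-2t})I)$. $\widehat s_{\mathrm{TSI}}$ and $\widehat s_{\mathrm{TWD}}$ are self-normalized importance sampling estimators (Target Score Identity and Tweedie estimators) of the score $\nabla_y\log p_t(y)$ of the time-$t$ marginal $p_t(y)=\int p_{t|0}(y\mid x)p_0(x)\,dx$. *)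

theory Defs
  imports "HOL-Probability.Probability"
begin

text \<open>Symmetric positive definite matrices.\<close>
definition pos_def_mat :: "real^'d^'d \<Rightarrow> bool" where
  "pos_def_mat S \<longleftrightarrow> transpose S = S \<and> (\<forall>x. x \<noteq> 0 \<longrightarrow> x \<bullet> (S *v x) > 0)"

text \<open>Density of the multivariate normal N(mu, S) on R^d.\<close>
definition gauss_density :: "real^'d \<Rightarrow> real^'d^'d \<Rightarrow> real^'d \<Rightarrow> real" where
  "gauss_density mu S x =
     exp (- (1/2) * ((x - mu) \<bullet> (matrix_inv S *v (x - mu))))
     / sqrt ((2 * pi) ^ CARD('d) * det S)"

text \<open>Score of the Gaussian p0 = N(mu0, S).\<close>
definition gauss_score :: "real^'d \<Rightarrow> real^'d^'d \<Rightarrow> real^'d \<Rightarrow> real^'d" where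
  "gauss_score mu0 S x = - (matrix_inv S *v (x - mu0))"

text \<open>OU transition density p_{t|0}(y | x) = N(y; e^{-t} x, (1 - e^{-2t}) I).\<close>
definition ou_kernel :: "real \<Rightarrow> real^'d \<Rightarrow> real^'d \<Rightarrow> real" where
  "ou_kernel t y x = gauss_density (exp (-t) *\<^sub>R x) ((1 - exp (-2*t)) *\<^sub>R mat 1) y"

text \<open>Self-normalised weights, samples indexed by 1..N.\<close>
definition snis_weight :: "real \<Rightarrow> real^'d \<Rightarrow> nat \<Rightarrow> (nat \<Rightarrow> real^'d) \<Rightarrow> nat \<Rightarrow> real" where
  "snis_weight t y N X i = ou_kernel t y (X i) / (\<Sum>j\<in>{1..N}. ou_kernel t y (X j))"

definition s_TSI :: "real^'d \<Rightarrow> real^'d^'d \<Rightarrow> real \<Rightarrow> real^'d \<Rightarrow> nat \<Rightarrow> (nat \<Rightarrow> real^'d) \<Rightarrow> real^'d" where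
  "s_TSI mu0 S t y N X = exp t *\<^sub>R (\<Sum>i\<in>{1..N}. snis_weight t y N X i *\<^sub>R gauss_score mu0 S (X i))"

definition s_TWD :: "real \<Rightarrow> real^'d \<Rightarrow> nat \<Rightarrow> (nat \<Rightarrow> real^'d) \<Rightarrow> real^'d" where
  "s_TWD t y N X = - (1 / (1 - exp (-2*t))) *\<^sub>R
      (\<Sum>i\<in>{1..N}. snis_weight t y N X i *\<^sub>R (y - exp (-t) *\<^sub>R X i))"

definition mu_SNIS :: "real \<Rightarrow> real^'d \<Rightarrow> nat \<Rightarrow> (nat \<Rightarrow> real^'d) \<Rightarrow> real^'d" where
  "mu_SNIS t y N X = (\<Sum>i\<in>{1..N}. snis_weight t y N X i *\<^sub>R X i)"

text \<open>Cross-covariance matrix Cov(U,V) = E[(U - EU)(V - EV)^T].\<close>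
definition cross_cov :: "'s measure \<Rightarrow> ('s \<Rightarrow> real^'d) \<Rightarrow> ('s \<Rightarrow> real^'d) \<Rightarrow> real^'d^'d" where
  "cross_cov M U V = (\<chi> i j. \<integral>w. (U w $ i - (\<integral>v. U v $ i \<partial>M)) * (V w $ j - (\<integral>v. V v $ j \<partial>M)) \<partial>M)"

text \<open>Law of N i.i.d. reference samples from p0 = N(mu0, S), indexed by 1..N.\<close>
definition ref_samples :: "nat \<Rightarrow> real^'d \<Rightarrow> real^'d^'d \<Rightarrow> (nat \<Rightarrow> real^'d) measure" where
  "ref_samples N mu0 S = PiM {1..N} (\<lambda>_. density lborel (\<lambda>x. ennreal (gauss_density mu0 S x)))"

end

theory Submission
  imports Defs "HOL-Analysis.Analysis"
begin

typedef 'a wo = "UNIV :: 'a set" by auto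

instance wo :: (finite) finite
proof
  have "(UNIV :: 'a wo set) = range Abs_wo"
    by (metis Abs_wo_cases UNIV_eq_I rangeI)
  then show "finite (UNIV :: 'a wo set)" by (metis finite finite_imageI)
qed

instantiation wo :: (finite) linorder
begin
definition "less_eq_wo (x::'a wo) (y::'a wo) \<longleftrightarrow> to_nat (Rep_wo x) \<le> to_nat (Rep_wo y)"
definition "less_wo (x::'a wo) (y::'a wo) \<longleftrightarrow> to_nat (Rep_wo x) < to_nat (Rep_wo y)"
instance
proof
  fix x y :: "'a wo"
  show "x \<le> y \<Longrightarrow> y \<le> x \<Longrightarrow> x = y"
    unfolding less_eq_wo_def by (metis Rep_wo_inject antisym to_nat_split)
qed (auto simp: less_eq_wo_def less_wo_def)
end

instance wo :: (finite) wellorder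
proof
  fix P :: "'a wo \<Rightarrow> bool" and a :: "'a wo"
  assume H: "\<And>x. (\<And>y. y < x \<Longrightarrow> P y) \<Longrightarrow> P x"
  have "\<forall>a. to_nat (Rep_wo a) = n \<longrightarrow> P a" for n
  proof (induction n rule: less_induct)
    case (less n)
    then show ?case using H unfolding less_wo_def by metis
  qed
  then show "P a" by blast
qed

definition relab :: "real^'d::finite \<Rightarrow> real^'d wo" where "relab x = (\<chi> i. x $ Rep_wo i)"
definition unrelab :: "real^'d wo \<Rightarrow> real^'d::finite" where "unrelab y = (\<chi> j. y $ Abs_wo j)"

lemma relab_unrelab[simp]: "relab (unrelab y) = y" "unrelab (relab x) = x"
  by (simp_all add: relab_def unrelab_def vec_eq_iff Abs_wo_inverse Rep_wo_inverse)

lemma linear_relab: "linear relab"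
  by (auto simp: linear_iff relab_def vec_eq_iff)
lemma linear_unrelab: "linear unrelab"
  by (auto simp: linear_iff unrelab_def vec_eq_iff)

lemma relab_meas[measurable]: "relab \<in> borel_measurable borel"
  by (intro borel_measurable_continuous_onI linear_continuous_on linear_conv_bounded_linear[THEN iffD1] linear_relab)
lemma unrelab_meas[measurable]: "unrelab \<in> borel_measurable borel"
  by (intro borel_measurable_continuous_onI linear_continuous_on linear_conv_bounded_linear[THEN iffD1] linear_unrelab)

lemma Basis_vec_real: "(Basis :: (real^'n) set) = range (\<lambda>i. axis i 1)"
  by (auto simp: Basis_vec_def)

lemma prod_Basis_vec: "(\<Prod>b\<in>(Basis::(real^'n) set). f b) = (\<Prod>i\<in>UNIV. f (axis i 1))"
proof -
  have "inj (\<lambda>i::'n. axis i (1::real))" by (auto intro!: injI simp: axis_eq_axis)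
  then show ?thesis unfolding Basis_vec_real by (simp add: prod.reindex)
qed

lemma sum_Basis_vec: "(\<Sum>b\<in>(Basis::(real^'n) set). f b) = (\<Sum>i\<in>UNIV. f (axis i 1))"
proof -
  have "inj (\<lambda>i::'n. axis i (1::real))" by (auto intro!: injI simp: axis_eq_axis)
  then show ?thesis unfolding Basis_vec_real by (simp add: sum.reindex)
qed

lemma all_Rep_wo: "(\<forall>i. P (Rep_wo i)) \<longleftrightarrow> (\<forall>j. P j)"
proof
  assume H: "\<forall>i. P (Rep_wo i)"
  show "\<forall>j. P j"
  proof
    fix j show "P j" using H[rule_format, of "Abs_wo j"] by (simp add: Abs_wo_inverse)
  qed
qed simp

lemma box_relab: "relab -` box l u = box (unrelab l) (unrelab u)"
proof (rule set_eqI)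
  fix x :: "real^'a"
  have "x \<in> relab -` box l u \<longleftrightarrow> (\<forall>i. l$i < x$Rep_wo i \<and> x$Rep_wo i < u$i)"
    by (simp add: mem_box_cart relab_def)
  also have "\<dots> \<longleftrightarrow> (\<forall>j. l$Abs_wo j < x$j \<and> x$j < u$Abs_wo j)"
    using all_Rep_wo[of "\<lambda>j. l$Abs_wo j < x$j \<and> x$j < u$Abs_wo j"] by (simp add: Rep_wo_inverse)
  also have "\<dots> \<longleftrightarrow> x \<in> box (unrelab l) (unrelab u)"
    by (simp add: mem_box_cart unrelab_def)
  finally show "x \<in> relab -` box l u \<longleftrightarrow> x \<in> box (unrelab l) (unrelab u)" .
qed

lemma surj_Abs_wo: "surj Abs_wo"
  by (rule surjI[of _ Rep_wo]) (rule Rep_wo_inverse)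

lemma inj_Abs_wo: "inj Abs_wo"
  by (rule injI) (metis Abs_wo_inverse UNIV_I)

lemma prod_wo: "(\<Prod>i\<in>(UNIV::'a::finite wo set). f i) = (\<Prod>j\<in>UNIV. f (Abs_wo j))"
proof -
  have "(\<Prod>j\<in>UNIV. f (Abs_wo j)) = prod f (range Abs_wo)"
    using prod.reindex[OF inj_Abs_wo, of f] by (simp add: o_def)
  then show ?thesis using surj_Abs_wo by metis
qed

lemma distr_relab: "distr lborel borel (relab :: real^'d::finite \<Rightarrow> _) = lborel"
proof (rule lborel_eqI[symmetric])
  fix l u :: "real^'d wo" assume lu: "\<And>b. b \<in> Basis \<Longrightarrow> l \<bullet> b \<le> u \<bullet> b"
  have le: "l $ i \<le> u $ i" for i using lu[of "axis i 1"] by (auto simp: Basis_vec_real inner_axis)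
  have "emeasure (distr lborel borel relab) (box l u) = emeasure lborel (box (unrelab l) (unrelab u :: real^'d))"
    by (subst emeasure_distr) (auto simp: box_relab)
  also have "\<dots> = (\<Prod>b\<in>Basis. (unrelab u - unrelab l :: real^'d) \<bullet> b)"
    using le by (subst emeasure_lborel_box) (auto simp: Basis_vec_real inner_axis unrelab_def)
  also have "\<dots> = (\<Prod>b\<in>Basis. (u - l) \<bullet> b)"
    by (simp add: prod_Basis_vec inner_axis unrelab_def prod_wo)
  finally show "emeasure (distr lborel borel relab) (box l u) = (\<Prod>b\<in>Basis. (u - l) \<bullet> b)" .
qed simp

lemma matrix_inv_props:
  fixes A :: "'a::field^'n^'n"
  assumes "invertible A"
  shows "A ** matrix_inv A = mat 1" "matrix_inv A ** A = mat 1"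
proof -
  have "\<exists>A'. A ** A' = mat 1 \<and> A' ** A = mat 1" using assms unfolding invertible_def by blast
  then have "A ** matrix_inv A = mat 1 \<and> matrix_inv A ** A = mat 1"
    unfolding matrix_inv_def by (rule someI_ex)
  then show "A ** matrix_inv A = mat 1" "matrix_inv A ** A = mat 1" by auto
qed

lemma matrix_inv_unique:
  fixes A B :: "'a::field^'n^'n"
  assumes "A ** B = mat 1" "B ** A = mat 1"
  shows "matrix_inv A = B"
proof -
  have inv: "invertible A" using assms unfolding invertible_def by blast
  have "matrix_inv A = matrix_inv A ** (A ** B)" using assms by (simp add: matrix_mul_rid)
  also have "\<dots> = (matrix_inv A ** A) ** B" by (simp add: matrix_mul_assoc)
  also have "\<dots> = B" using matrix_inv_props[OF inv] by (simp add: matrix_mul_lid)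
  finally show ?thesis .
qed

lemma lborel_linear_wo:
  fixes L :: "real^('e::{finite,wellorder})^('e::{finite,wellorder})"
  assumes "det L \<noteq> 0"
  shows "lborel = density (distr lborel borel (\<lambda>z. L *v z)) (\<lambda>_. ennreal \<bar>det L\<bar>)"
proof (rule lborel_eqI)
  fix l u :: "real^('e::{finite,wellorder})" assume lu: "\<And>b. b \<in> Basis \<Longrightarrow> l \<bullet> b \<le> u \<bullet> b"
  define Li where "Li = matrix_inv L"
  have inv: "invertible L" using assms invertible_det_nz by blast
  have LLi: "L ** Li = mat 1" "Li ** L = mat 1" using matrix_inv_props[OF inv] Li_def by auto
  have pre: "(\<lambda>z. L *v z) -` box l u = (\<lambda>x. Li *v x) ` box l u"
  proof (intro set_eqI iffI)
    fix z assume "z \<in> (\<lambda>z. L *v z) -` box l u"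
    moreover have "z = Li *v (L *v z)" by (simp add: matrix_vector_mul_assoc LLi)
    ultimately show "z \<in> (\<lambda>x. Li *v x) ` box l u" by blast
  next
    fix z assume "z \<in> (\<lambda>x. Li *v x) ` box l u"
    then obtain x where "x \<in> box l u" "z = Li *v x" by blast
    then show "z \<in> (\<lambda>z. L *v z) -` box l u" by (simp add: matrix_vector_mul_assoc LLi)
  qed
  have detLi: "det Li * det L = 1" using LLi(2) det_mul[of Li L] by simp
  have box_lm: "box l u \<in> lmeasurable" by (simp add: lmeasurable_open)
  have img: "(\<lambda>x. Li *v x) ` box l u \<in> lmeasurable"
    "measure lebesgue ((\<lambda>x. Li *v x) ` box l u) = \<bar>det Li\<bar> * measure lebesgue (box l u)"
    using measurable_linear_image[OF matrix_vector_mul_linear box_lm]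
      measure_linear_image[OF matrix_vector_mul_linear box_lm] by auto
  have Lmeas[measurable]: "(\<lambda>z. L *v z) \<in> borel_measurable borel"
    by (intro borel_measurable_continuous_onI linear_continuous_on linear_conv_bounded_linear[THEN iffD1] matrix_vector_mul_linear)
  have pre_borel: "(\<lambda>z. L *v z) -` box l u \<in> sets borel"
    using measurable_sets[OF Lmeas, of "box l u"] by simp
  have "emeasure (density (distr lborel borel (\<lambda>z. L *v z)) (\<lambda>_. ennreal \<bar>det L\<bar>)) (box l u)
      = ennreal \<bar>det L\<bar> * emeasure (distr lborel borel (\<lambda>z. L *v z)) (box l u)"
    by (rule emeasure_density_const) simp_all
  also have "emeasure (distr lborel borel (\<lambda>z. L *v z)) (box l u) = emeasure lborel ((\<lambda>z. L *v z) -` box l u)"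
    by (subst emeasure_distr) auto
  also have "\<dots> = emeasure lebesgue ((\<lambda>z. L *v z) -` box l u)"
    using pre_borel by simp
  also have "\<dots> = ennreal (measure lebesgue ((\<lambda>x. Li *v x) ` box l u))"
    unfolding pre using img(1) by (rule emeasure_eq_measure2)
  also have "\<dots> = ennreal (\<bar>det Li\<bar> * measure lborel (box l u))"
    using img(2) by simp
  also have "measure lborel (box l u) = (\<Prod>b\<in>Basis. (u - l) \<bullet> b)"
    using lu by (simp add: measure_lborel_box_eq)
  finally show "emeasure (density (distr lborel borel (\<lambda>z. L *v z)) (\<lambda>_. ennreal \<bar>det L\<bar>)) (box l u)
      = (\<Prod>b\<in>Basis. (u - l) \<bullet> b)"
    using detLi by (simp add: ennreal_mult'[symmetric] abs_mult[symmetric] mult.assoc[symmetric] mult.commute)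
qed simp

lemma inj_Rep_wo: "inj Rep_wo"
  by (rule injI) (simp add: Rep_wo_inject)

lemma surj_Rep_wo: "surj Rep_wo"
  by (rule surjI[of _ Abs_wo]) (simp add: Abs_wo_inverse)

lemma bij_Rep_wo: "bij_betw Rep_wo UNIV UNIV"
  using inj_Rep_wo surj_Rep_wo by (simp add: bij_betw_def)

lemma bij_Abs_wo: "bij_betw Abs_wo UNIV UNIV"
  using inj_Abs_wo surj_Abs_wo by (simp add: bij_betw_def)

lemma prod_Rep_wo: "(\<Prod>a\<in>(UNIV::'a::finite set). f a) = (\<Prod>i\<in>(UNIV :: 'a wo set). f (Rep_wo i))"
proof -
  have "(\<Prod>i\<in>(UNIV :: 'a wo set). f (Rep_wo i)) = prod f (range Rep_wo)"
    using prod.reindex[OF inj_Rep_wo, of f] by (simp add: o_def)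
  then show ?thesis using surj_Rep_wo by metis
qed

lemma det_relab:
  fixes L :: "real^'d::finite^'d"
  shows "det ((\<chi> i j. L $ Rep_wo i $ Rep_wo j) :: real^'d wo^'d wo) = det L"
proof -
  let ?L' = "(\<chi> i j. L $ Rep_wo i $ Rep_wo j) :: real^'d wo^'d wo"
  let ?j = "\<lambda>q. map_permutation (UNIV :: 'd wo set) Rep_wo q"
  let ?i = "\<lambda>p. map_permutation (UNIV :: 'd set) Abs_wo p"
  have "(\<Sum>q\<in>{q. q permutes (UNIV :: 'd wo set)}. of_int (sign q) * (\<Prod>i\<in>UNIV. ?L' $ i $ q i))
      = (\<Sum>p\<in>{p. p permutes (UNIV :: 'd set)}. of_int (sign p) * (\<Prod>a\<in>UNIV. L $ a $ p a))"
  proof (rule sum.reindex_bij_witness[where i = ?i and j = ?j])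
    fix q assume q: "q \<in> {q. q permutes (UNIV :: 'd wo set)}"
    show "?i (?j q) = q"
      using q by (intro map_permutation_compose_inv[OF bij_Rep_wo]) (auto simp: Rep_wo_inverse)
    show "?j q \<in> {p. p permutes (UNIV :: 'd set)}"
      using q map_permutation_permutes[OF bij_Rep_wo] by auto
    have sg: "sign (?j q) = sign q"
      using q by (intro sign_map_permutation) (auto simp: inj_Rep_wo)
    have ap: "?j q (Rep_wo i) = Rep_wo (q i)" for i
      by (rule map_permutation_apply) (auto simp: inj_Rep_wo)
    have "(\<Prod>a\<in>UNIV. L $ a $ ?j q a) = (\<Prod>i\<in>UNIV. L $ Rep_wo i $ ?j q (Rep_wo i))"
      by (rule prod_Rep_wo)
    also have "\<dots> = (\<Prod>i\<in>UNIV. ?L' $ i $ q i)" by (simp add: ap)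
    finally show "of_int (sign (?j q)) * (\<Prod>a\<in>UNIV. L $ a $ ?j q a) = of_int (sign q) * (\<Prod>i\<in>UNIV. ?L' $ i $ q i)"
      using sg by simp
  next
    fix p assume p: "p \<in> {p. p permutes (UNIV :: 'd set)}"
    show "?j (?i p) = p"
      using p by (intro map_permutation_compose_inv[OF bij_Abs_wo]) (auto simp: Abs_wo_inverse)
    show "?i p \<in> {q. q permutes (UNIV :: 'd wo set)}"
      using p map_permutation_permutes[OF bij_Abs_wo] by auto
  qed
  then show ?thesis unfolding det_def .
qed

lemma sum_Rep_wo: "(\<Sum>a\<in>(UNIV::'a::finite set). f a) = (\<Sum>i\<in>(UNIV :: 'a wo set). f (Rep_wo i))"
proof -
  have "(\<Sum>i\<in>(UNIV :: 'a wo set). f (Rep_wo i)) = sum f (range Rep_wo)"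
    using sum.reindex[OF inj_Rep_wo, of f] by (simp add: o_def)
  then show ?thesis using surj_Rep_wo by metis
qed

lemma nn_integral_relab:
  assumes [measurable]: "f \<in> borel_measurable borel"
  shows "(\<integral>\<^sup>+y. f (unrelab y) \<partial>lborel) = (\<integral>\<^sup>+x. f x \<partial>(lborel :: (real^'d::finite) measure))"
proof -
  have "(\<integral>\<^sup>+y. f (unrelab y) \<partial>lborel) = (\<integral>\<^sup>+y. f (unrelab y) \<partial>distr lborel borel (relab :: real^'d \<Rightarrow> _))"
    by (simp add: distr_relab)
  also have "\<dots> = (\<integral>\<^sup>+x. f x \<partial>lborel)"
    by (subst nn_integral_distr) auto
  finally show ?thesis .
qed

lemma nn_integral_linear_cov:
  fixes L :: "real^'d::finite^'d" and f :: "real^'d \<Rightarrow> ennreal"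
  assumes det: "det L \<noteq> 0" and [measurable]: "f \<in> borel_measurable borel"
  shows "(\<integral>\<^sup>+x. f x \<partial>lborel) = ennreal \<bar>det L\<bar> * (\<integral>\<^sup>+z. f (L *v z) \<partial>lborel)"
proof -
  define L' where "L' = ((\<chi> i j. L $ Rep_wo i $ Rep_wo j) :: real^'d wo^'d wo)"
  have dL': "det L' = det L" unfolding L'_def by (rule det_relab)
  have key: "unrelab (L' *v w) = L *v unrelab w" for w
  proof -
    have "(\<Sum>k\<in>UNIV. L $ j $ Rep_wo k * w $ k) = (\<Sum>a\<in>UNIV. L $ j $ a * w $ Abs_wo a)" for j
      by (subst sum_Rep_wo) (simp add: Rep_wo_inverse)
    then show ?thesis
      by (simp add: vec_eq_iff unrelab_def L'_def matrix_vector_mult_def Abs_wo_inverse)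
  qed
  have Lmeas[measurable]: "(\<lambda>z. L' *v z) \<in> borel_measurable borel"
    by (intro borel_measurable_continuous_onI linear_continuous_on linear_conv_bounded_linear[THEN iffD1] matrix_vector_mul_linear)
  have Lmeas2[measurable]: "(\<lambda>z. L *v z) \<in> borel_measurable borel"
    by (intro borel_measurable_continuous_onI linear_continuous_on linear_conv_bounded_linear[THEN iffD1] matrix_vector_mul_linear)
  have "(\<integral>\<^sup>+x. f x \<partial>lborel) = (\<integral>\<^sup>+y. f (unrelab y) \<partial>lborel)"
    by (simp add: nn_integral_relab)
  also have "\<dots> = (\<integral>\<^sup>+y. f (unrelab y) \<partial>density (distr lborel borel (\<lambda>z. L' *v z)) (\<lambda>_. ennreal \<bar>det L'\<bar>))"
    using lborel_linear_wo[of L'] det dL' by simp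
  also have "\<dots> = (\<integral>\<^sup>+y. ennreal \<bar>det L'\<bar> * f (unrelab y) \<partial>distr lborel borel (\<lambda>z. L' *v z))"
    by (subst nn_integral_density) auto
  also have "\<dots> = (\<integral>\<^sup>+w. ennreal \<bar>det L'\<bar> * f (unrelab (L' *v w)) \<partial>lborel)"
    by (subst nn_integral_distr) auto
  also have "\<dots> = ennreal \<bar>det L\<bar> * (\<integral>\<^sup>+w. f (L *v unrelab w) \<partial>lborel)"
    by (subst nn_integral_cmult) (auto simp: key dL')
  also have "(\<integral>\<^sup>+w. f (L *v unrelab w) \<partial>lborel) = (\<integral>\<^sup>+z. f (L *v z) \<partial>lborel)"
    by (rule nn_integral_relab) measurable
  finally show ?thesis .
qed

lemma nn_integral_affine_cov:
  fixes L :: "real^'d::finite^'d" and f :: "real^'d \<Rightarrow> ennreal"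
  assumes det: "det L \<noteq> 0" and [measurable]: "f \<in> borel_measurable borel"
  shows "(\<integral>\<^sup>+x. f x \<partial>lborel) = ennreal \<bar>det L\<bar> * (\<integral>\<^sup>+z. f (m + L *v z) \<partial>lborel)"
proof -
  have "(\<integral>\<^sup>+x. f x \<partial>lborel) = (\<integral>\<^sup>+x. f x \<partial>distr lborel borel ((+) m))"
    by (simp add: lborel_distr_plus)
  also have "\<dots> = (\<integral>\<^sup>+x. f (m + x) \<partial>lborel)"
    by (subst nn_integral_distr) auto
  also have "\<dots> = ennreal \<bar>det L\<bar> * (\<integral>\<^sup>+z. f (m + L *v z) \<partial>lborel)"
    by (rule nn_integral_linear_cov[OF det]) measurable
  finally show ?thesis .
qed

lemma sym_quad:
  fixes A :: "real^'n^'n"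
  assumes "transpose A = A"
  shows "x \<bullet> (A *v y) = y \<bullet> (A *v x)"
proof -
  have "x \<bullet> (A *v y) = (x v* A) \<bullet> y" by (simp add: dot_lmul_matrix)
  also have "x v* A = transpose A *v x" by simp
  finally show ?thesis using assms by (simp add: inner_commute)
qed

lemma mv_sum: "(A::real^'n^'m) *v (\<Sum>j\<in>K. f j) = (\<Sum>j\<in>K. A *v f j)"
  using linear_sum[OF matrix_vector_mul_linear[of A], of f K] by (simp add: o_def)

lemma gram_schmidt_A:
  fixes A :: "real^'n::finite^'n"
  assumes sym: "transpose A = A" and pd: "\<And>x. x \<noteq> 0 \<Longrightarrow> x \<bullet> (A *v x) > 0"
  shows "\<exists>v::'n \<Rightarrow> real^'n. \<forall>i j. v i \<bullet> (A *v v j) = (if i = j then 1 else 0)"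
proof -
  have P: "\<exists>v::'n \<Rightarrow> real^'n. (\<forall>j\<in>K. \<forall>i. i \<notin> K \<longrightarrow> v j $ i = 0) \<and>
            (\<forall>i\<in>K. \<forall>j\<in>K. v i \<bullet> (A *v v j) = (if i = j then 1 else 0))" if "finite K" for K :: "'n set"
    using that
  proof (induction K rule: finite_induct)
    case empty then show ?case by simp
  next
    case (insert k K)
    from insert.IH obtain v where supp: "\<forall>j\<in>K. \<forall>i. i \<notin> K \<longrightarrow> v j $ i = 0"
      and orth: "\<forall>i\<in>K. \<forall>j\<in>K. v i \<bullet> (A *v v j) = (if i = j then 1 else 0)" by blast
    define c where "c j = v j \<bullet> (A *v axis k 1)" for j
    define w where "w = axis k 1 - (\<Sum>j\<in>K. c j *\<^sub>R v j)"
    have wk: "w $ k = 1"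
      using supp insert.hyps by (simp add: w_def axis_def)
    then have "w \<noteq> 0" by auto
    then have qpos: "w \<bullet> (A *v w) > 0" using pd by blast
    define q where "q = w \<bullet> (A *v w)"
    have Aw: "v j \<bullet> (A *v w) = 0" if "j \<in> K" for j
    proof -
      have "v j \<bullet> (A *v w) = c j - (\<Sum>j'\<in>K. c j' * (v j \<bullet> (A *v v j')))"
        by (simp add: w_def c_def matrix_vector_mult_diff_distrib mv_sum
                      matrix_vector_mult_scaleR inner_diff_right inner_sum_right)
      also have "(\<Sum>j'\<in>K. c j' * (v j \<bullet> (A *v v j'))) = (\<Sum>j'\<in>K. if j' = j then c j' else 0)"
        using orth that by (intro sum.cong) auto
      also have "\<dots> = c j" using that insert.hyps by simp
      finally show ?thesis by simp
    qed
    define v' where "v' = v(k := (1 / sqrt q) *\<^sub>R w)"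
    show ?case
    proof (intro exI[of _ v'] conjI ballI allI impI)
      fix j i assume j: "j \<in> insert k K" and i: "i \<notin> insert k K"
      show "v' j $ i = 0"
      proof (cases "j = k")
        case True
        have "w $ i = 0" using supp i by (simp add: w_def axis_def)
        then show ?thesis using True by (simp add: v'_def)
      next
        case False
        then show ?thesis using supp i j by (simp add: v'_def)
      qed
    next
      fix i j assume i: "i \<in> insert k K" and j: "j \<in> insert k K"
      show "v' i \<bullet> (A *v v' j) = (if i = j then 1 else 0)"
      proof (cases "i = k"; cases "j = k")
        assume "i = k" "j = k"
        then show ?thesis using qpos
          by (simp add: v'_def matrix_vector_mult_scaleR q_def[symmetric] real_sqrt_mult[symmetric]
                        field_simps)
      next
        assume "i = k" "j \<noteq> k"
        then have "j \<in> K" using j by auto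
        then show ?thesis using \<open>i = k\<close> \<open>j \<noteq> k\<close> Aw sym_quad[OF sym, of w "v j"]
          by (simp add: v'_def matrix_vector_mult_scaleR)
      next
        assume "i \<noteq> k" "j = k"
        then have "i \<in> K" using i by auto
        then show ?thesis using \<open>i \<noteq> k\<close> \<open>j = k\<close> Aw
          by (simp add: v'_def matrix_vector_mult_scaleR)
      next
        assume "i \<noteq> k" "j \<noteq> k"
        then show ?thesis using i j orth by (simp add: v'_def)
      qed
    qed
  qed
  from P[of UNIV] show ?thesis by auto
qed

lemma gram_L:
  fixes A :: "real^'n::finite^'n"
  assumes orth: "\<And>i j. v i \<bullet> (A *v v j) = (if i = j then 1 else 0)"
  defines "L \<equiv> (\<chi> i j. v j $ i)"
  shows "transpose L ** A ** L = mat 1" "(L *v z) \<bullet> (A *v (L *v z)) = z \<bullet> z"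
proof -
  have col: "L *v axis j 1 = v j" for j
    by (simp add: matrix_vector_mult_basis column_def L_def vec_eq_iff)
  have tr: "transpose L $ i = v i" for i
    by (simp add: transpose_def L_def vec_eq_iff)
  have "(transpose L ** A ** L) $ i $ j = mat 1 $ i $ j" for i j
  proof -
    have "(transpose L ** A ** L) $ i $ j = ((transpose L ** A ** L) *v axis j 1) $ i"
      by (simp add: matrix_vector_mult_basis column_def)
    also have "(transpose L ** A ** L) *v axis j 1 = transpose L *v (A *v (L *v axis j 1))"
      by (simp add: matrix_vector_mul_assoc matrix_mul_assoc)
    also have "(transpose L *v (A *v (L *v axis j 1))) $ i = v i \<bullet> (A *v v j)"
      unfolding col by (simp add: vector_matrix_mult_def L_def inner_vec_def mult.commute)
    finally show ?thesis by (simp add: orth mat_def)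
  qed
  then show M: "transpose L ** A ** L = mat 1" by (simp add: vec_eq_iff)
  have "z \<bullet> ((transpose L ** A ** L) *v z) = (L *v z) \<bullet> (A *v (L *v z))"
  proof -
    have "z \<bullet> ((transpose L ** A ** L) *v z) = z \<bullet> (transpose L *v (A *v (L *v z)))"
      by (simp add: matrix_vector_mul_assoc matrix_mul_assoc)
    also have "\<dots> = (L *v z) \<bullet> (A *v (L *v z))"
    proof -
      have "transpose L *v w = w v* L" for w by simp
      moreover have "z \<bullet> (w v* L) = (L *v z) \<bullet> w" for w
      proof -
        have "z \<bullet> (w v* L) = (w v* L) \<bullet> z" by (rule inner_commute)
        also have "\<dots> = w \<bullet> (L *v z)" by (rule dot_lmul_matrix)
        also have "\<dots> = (L *v z) \<bullet> w" by (rule inner_commute)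
        finally show ?thesis .
      qed
      ultimately show ?thesis by simp
    qed
    finally show ?thesis .
  qed
  then show "(L *v z) \<bullet> (A *v (L *v z)) = z \<bullet> z" using M by simp
qed

lemma posdef_facts:
  fixes S :: "real^'n::finite^'n"
  assumes "pos_def_mat S"
  defines "A \<equiv> matrix_inv S"
  shows "S ** A = mat 1" "A ** S = mat 1" "transpose A = A"
    "\<And>x. x \<noteq> 0 \<Longrightarrow> x \<bullet> (A *v x) > 0" "det A * det S = 1"
    "\<And>x. x \<bullet> (A *v x) \<ge> 0"
proof -
  have symS: "transpose S = S" and pdS: "\<And>x. x \<noteq> 0 \<Longrightarrow> x \<bullet> (S *v x) > 0"
    using assms unfolding pos_def_mat_def by auto
  have "inj ((*v) S)"
  proof (rule injI)
    fix x y assume "S *v x = S *v y"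
    then have "S *v (x - y) = 0" by (simp add: matrix_vector_mult_diff_distrib)
    then show "x = y" using pdS[of "x - y"] by (cases "x - y = 0") auto
  qed
  then have "det S \<noteq> 0" using det_nz_iff_inj[OF matrix_vector_mul_linear[of S]] by simp
  then have inv: "invertible S" using invertible_det_nz by blast
  show SA: "S ** A = mat 1" and AS: "A ** S = mat 1" using matrix_inv_props[OF inv] A_def by auto
  have "transpose A ** S = mat 1"
    using arg_cong[OF SA, of transpose] symS by (simp add: matrix_transpose_mul transpose_mat)
  moreover have "S ** transpose A = mat 1"
    using arg_cong[OF AS, of transpose] symS by (simp add: matrix_transpose_mul transpose_mat)
  ultimately have "matrix_inv S = transpose A" by (intro matrix_inv_unique)
  then show symA: "transpose A = A" using A_def by simp
  show pdA: "x \<bullet> (A *v x) > 0" if "x \<noteq> 0" for x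
  proof -
    define y where "y = A *v x"
    have Sy: "S *v y = x" by (simp add: y_def matrix_vector_mul_assoc SA)
    then have "y \<noteq> 0" using that by auto
    then have "y \<bullet> (S *v y) > 0" by (rule pdS)
    then show ?thesis using Sy by (simp add: y_def inner_commute)
  qed
  show "det A * det S = 1" using AS det_mul[of A S] by simp
  show "x \<bullet> (A *v x) \<ge> 0" for x using pdA[of x] by (cases "x = 0") auto
qed

definition stdg :: "real^'n::finite \<Rightarrow> real" where
  "stdg z = (\<Prod>b\<in>Basis. std_normal_density (z \<bullet> b))"

lemma stdg_eq: "stdg (z::real^'n::finite) = exp (- (z \<bullet> z) / 2) / sqrt (2 * pi) ^ CARD('n)"
proof -
  have "stdg z = (\<Prod>b\<in>Basis. (1 / sqrt (2 * pi)) * exp (- (z \<bullet> b)\<^sup>2 / 2))"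
    by (simp add: stdg_def std_normal_density_def)
  also have "\<dots> = exp (\<Sum>b\<in>Basis. - (z \<bullet> b)\<^sup>2 / 2) / sqrt (2 * pi) ^ CARD('n)"
    by (simp add: prod_dividef exp_sum)
  also have "(\<Sum>b\<in>(Basis :: (real^'n) set). - (z \<bullet> b)\<^sup>2 / 2) = - (z \<bullet> z) / 2"
    by (simp add: euclidean_inner[of z z] sum_negf sum_divide_distrib power2_eq_square)
  finally show ?thesis .
qed

lemma stdg_nonneg: "stdg z \<ge> 0"
  by (simp add: stdg_def prod_nonneg)

lemma stdg_meas[measurable]: "stdg \<in> borel_measurable borel"
  unfolding stdg_def by measurable

lemma nn_std_normal: "(\<integral>\<^sup>+x. ennreal (std_normal_density x) \<partial>lborel) = 1"
  by (subst nn_integral_eq_integral) auto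

lemma nn_std_normal_sq: "(\<integral>\<^sup>+x. ennreal (std_normal_density x * x^2) \<partial>lborel) < \<infinity>"
proof -
  have "(\<integral>\<^sup>+x. ennreal (std_normal_density x * x^2) \<partial>lborel) = ennreal (\<integral>x. std_normal_density x * x^2 \<partial>lborel)"
    by (subst nn_integral_eq_integral) (auto intro: integrable_std_normal_moment)
  then show ?thesis by simp
qed

lemma nn_stdg: "(\<integral>\<^sup>+z. ennreal (stdg (z::real^'n::finite)) \<partial>lborel) = 1"
proof -
  have "(\<integral>\<^sup>+z. ennreal (stdg (z::real^'n)) \<partial>lborel) = (\<integral>\<^sup>+z. (\<Prod>b\<in>Basis. ennreal (std_normal_density ((z::real^'n) \<bullet> b))) \<partial>lborel)"
    by (simp add: stdg_def prod_ennreal)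
  also have "\<dots> = (\<Prod>b\<in>(Basis :: (real^'n) set). (\<integral>\<^sup>+x. ennreal (std_normal_density x) \<partial>lborel))"
    by (rule nn_integral_lborel_prod) auto
  finally show ?thesis by (simp add: nn_std_normal)
qed

lemma nn_stdg_sq: "(\<integral>\<^sup>+z. ennreal (stdg (z::real^'n::finite) * (z \<bullet> z)) \<partial>lborel) < \<infinity>"
proof -
  have eq: "ennreal (stdg z * (z \<bullet> z)) = (\<Sum>b0\<in>Basis. (\<Prod>b\<in>Basis.
      ennreal (std_normal_density (z \<bullet> b) * (if b = b0 then (z \<bullet> b)^2 else 1))))" for z :: "real^'n"
  proof -
    have "(\<Prod>b\<in>Basis. ennreal (std_normal_density (z \<bullet> b) * (if b = b0 then (z \<bullet> b)^2 else 1)))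
        = ennreal (stdg z * (z \<bullet> b0)^2)" if "b0 \<in> Basis" for b0
      using that by (subst prod_ennreal) (auto simp: stdg_def prod.distrib prod.delta)
    then have "(\<Sum>b0\<in>Basis. (\<Prod>b\<in>Basis.
      ennreal (std_normal_density (z \<bullet> b) * (if b = b0 then (z \<bullet> b)^2 else 1))))
        = (\<Sum>b0\<in>Basis. ennreal (stdg z * (z \<bullet> b0)^2))" by (intro sum.cong) auto
    also have "\<dots> = ennreal (\<Sum>b0\<in>Basis. stdg z * (z \<bullet> b0)^2)"
      by (subst sum_ennreal) (auto intro!: mult_nonneg_nonneg stdg_nonneg)
    also have "(\<Sum>b0\<in>Basis. stdg z * (z \<bullet> b0)^2) = stdg z * (z \<bullet> z)"
      by (simp add: euclidean_inner[of z z] sum_distrib_left power2_eq_square)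
    finally show ?thesis by simp
  qed
  have "(\<integral>\<^sup>+z. ennreal (stdg (z::real^'n) * (z \<bullet> z)) \<partial>lborel)
      = (\<Sum>b0\<in>Basis. (\<integral>\<^sup>+z. (\<Prod>b\<in>Basis.
      ennreal (std_normal_density ((z::real^'n) \<bullet> b) * (if b = b0 then (z \<bullet> b)^2 else 1))) \<partial>lborel))"
    unfolding eq by (subst nn_integral_sum) auto
  also have "\<dots> = (\<Sum>b0\<in>(Basis :: (real^'n) set). (\<Prod>b\<in>Basis. (\<integral>\<^sup>+x.
      ennreal (std_normal_density x * (if b = b0 then x^2 else 1)) \<partial>lborel)))"
    by (intro sum.cong refl nn_integral_lborel_prod[where f = "\<lambda>b x. ennreal (std_normal_density x * (if b = b0 then x^2 else 1))" for b0, simplified])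
  also have "\<dots> < \<infinity>"
  proof -
    have lt: "(\<integral>\<^sup>+x. ennreal (std_normal_density x * (if b = b0 then x^2 else 1)) \<partial>lborel) < \<infinity>" for b b0 :: "real^'n"
      using nn_std_normal_sq nn_std_normal by (cases "b = b0") auto
    define F where "F b b0 = (\<integral>\<^sup>+x. ennreal (std_normal_density x * (if b = b0 then x^2 else 1)) \<partial>lborel)" for b b0 :: "real^'n"
    have fin: "F b b0 \<noteq> \<top>" for b b0
      unfolding F_def using lt[of b b0] by auto
    have pfin: "(\<Prod>b\<in>Basis. F b b0) \<noteq> \<top>" for b0
      unfolding ennreal_prod_eq_top using fin by blast
    have "(\<Sum>b0\<in>Basis. \<Prod>b\<in>Basis. F b b0) \<noteq> \<top>"
      unfolding ennreal_sum_eq_top[OF finite_Basis] using pfin by blast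
    then show ?thesis unfolding F_def by (simp add: less_top)

  qed
  finally show ?thesis .
qed

lemma mv_measurable[measurable]:
  "f \<in> borel_measurable M \<Longrightarrow> (\<lambda>x. (B::real^'n::finite^'m::finite) *v f x) \<in> borel_measurable M"
proof -
  assume f: "f \<in> borel_measurable M"
  have "(\<lambda>z. B *v z) \<in> borel_measurable borel"
    by (intro borel_measurable_continuous_onI linear_continuous_on linear_conv_bounded_linear[THEN iffD1] matrix_vector_mul_linear)
  from measurable_compose[OF f this] show ?thesis by (simp add: o_def)
qed

lemma gauss_meas[measurable]: "gauss_density mu S \<in> borel_measurable borel"
  unfolding gauss_density_def by measurable

lemma pd_decomp:
  fixes S :: "real^'d::finite^'d"
  assumes "pos_def_mat S"
  shows "\<exists>L. det L * det L = det S \<and> (\<forall>z. (L *v z) \<bullet> (matrix_inv S *v (L *v z)) = z \<bullet> z)"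
proof -
  define A where "A = matrix_inv S"
  have symA: "transpose A = A" using posdef_facts(3)[OF assms] A_def by simp
  have pdA: "\<And>x. x \<noteq> 0 \<Longrightarrow> x \<bullet> (A *v x) > 0" using posdef_facts(4)[OF assms] A_def by simp
  have dA: "det A * det S = 1" using posdef_facts(5)[OF assms] A_def by simp
  have ex: "\<exists>v::'d \<Rightarrow> real^'d. \<forall>i j. v i \<bullet> (A *v v j) = (if i = j then 1 else 0)"
    by (rule gram_schmidt_A[OF symA pdA])
  then obtain v :: "'d \<Rightarrow> real^'d" where orth: "\<And>i j. v i \<bullet> (A *v v j) = (if i = j then 1 else 0)"
    by blast
  define L where "L = (\<chi> i j. v j $ i)"
  have gl1: "transpose L ** A ** L = mat 1" using gram_L(1)[of v A, OF orth] L_def by simp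
  have gl2: "(L *v z) \<bullet> (A *v (L *v z)) = z \<bullet> z" for z using gram_L(2)[of v A, OF orth] L_def by simp
  have "det (transpose L ** A ** L) = 1" using gl1 by simp
  then have "det L * det A * det L = 1" by (simp add: det_mul)
  then have dd: "det L * det L = det S" using dA
    by (metis mult.commute mult.left_commute mult_cancel_left2 mult_zero_left)
  show ?thesis using dd gl2 A_def by blast
qed

lemma det_pos: "pos_def_mat (S :: real^'d::finite^'d) \<Longrightarrow> det S > 0"
proof -
  assume a: "pos_def_mat S"
  obtain L :: "real^'d^'d" where dd: "det L * det L = det S" using pd_decomp[OF a] by blast
  have "det S \<noteq> 0" using posdef_facts(5)[OF a] by auto
  moreover have "0 \<le> det L * det L" by simp
  ultimately show ?thesis using dd by linarith
qed

lemma gauss_nonneg: "pos_def_mat S \<Longrightarrow> gauss_density mu S x \<ge> 0"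
  using det_pos[of S] unfolding gauss_density_def by simp

lemma gauss_decomp:
  fixes S :: "real^'d::finite^'d"
  assumes "pos_def_mat S"
  shows "\<exists>L. det L \<noteq> 0 \<and> (\<forall>z. gauss_density mu0 S (mu0 + L *v z) = stdg z / \<bar>det L\<bar>)"
proof -
  obtain L :: "real^'d^'d" where dd: "det L * det L = det S" and gl2: "\<And>z. (L *v z) \<bullet> (matrix_inv S *v (L *v z)) = z \<bullet> z"
    using pd_decomp[OF assms] by blast
  then have "det L \<noteq> 0" using det_pos[OF assms] by auto
  have sq: "sqrt ((2 * pi) ^ CARD('d) * det S) = sqrt (2 * pi) ^ CARD('d) * \<bar>det L\<bar>"
    by (simp add: real_sqrt_mult real_sqrt_power dd[symmetric] power_mult_distrib)
  have "gauss_density mu0 S (mu0 + L *v z) = stdg z / \<bar>det L\<bar>" for z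
    unfolding gauss_density_def stdg_eq sq using gl2[of z]
    by (simp add: field_simps)
  with \<open>det L \<noteq> 0\<close> show ?thesis by blast
qed
lemma gauss_total:
  fixes S :: "real^'d::finite^'d"
  assumes "pos_def_mat S"
  shows "(\<integral>\<^sup>+x. ennreal (gauss_density mu0 S x) \<partial>lborel) = 1"
proof -
  obtain L :: "real^'d^'d" where dL: "det L \<noteq> 0" and g: "\<And>z. gauss_density mu0 S (mu0 + L *v z) = stdg z / \<bar>det L\<bar>"
    using gauss_decomp[OF assms] by blast
  have "(\<integral>\<^sup>+x. ennreal (gauss_density mu0 S x) \<partial>lborel)
      = ennreal \<bar>det L\<bar> * (\<integral>\<^sup>+z. ennreal (stdg (z::real^'d) / \<bar>det L\<bar>) \<partial>lborel)"
    by (subst nn_integral_affine_cov[OF dL, of _ mu0]) (auto simp: g)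
  also have "\<dots> = (\<integral>\<^sup>+z. ennreal \<bar>det L\<bar> * ennreal (stdg (z::real^'d) / \<bar>det L\<bar>) \<partial>lborel)"
    by (subst nn_integral_cmult) auto
  also have "\<dots> = (\<integral>\<^sup>+z. ennreal (stdg (z::real^'d)) \<partial>lborel)"
    using dL by (intro nn_integral_cong) (simp add: ennreal_mult'[symmetric] stdg_nonneg)
  finally show ?thesis by (simp add: nn_stdg)
qed

lemma gauss_second:
  fixes S :: "real^'d::finite^'d"
  assumes "pos_def_mat S"
  shows "(\<integral>\<^sup>+x. ennreal (gauss_density mu0 S x * (norm x)^2) \<partial>lborel) < \<infinity>"
proof -
  obtain L :: "real^'d^'d" where dL: "det L \<noteq> 0" and g: "\<And>z. gauss_density mu0 S (mu0 + L *v z) = stdg z / \<bar>det L\<bar>"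
    using gauss_decomp[OF assms] by blast
  obtain K where K: "K > 0" "\<And>z. norm (L *v z) \<le> norm z * K"
    using bounded_linear.pos_bounded[OF matrix_vector_mul_bounded_linear[of L]] by blast
  define C where "C = 2 * (norm mu0)^2 + 2 * K^2"
  have bound: "(norm (mu0 + L *v z))^2 \<le> C + C * (z \<bullet> z)" for z
  proof -
    have "norm (mu0 + L *v z) \<le> norm mu0 + norm z * K" using norm_triangle_ineq[of mu0 "L *v z"] K(2)[of z] by linarith
    then have "(norm (mu0 + L *v z))^2 \<le> (norm mu0 + norm z * K)^2" by (intro power_mono) auto
    also have "\<dots> \<le> 2 * (norm mu0)^2 + 2 * (norm z * K)^2"
      by (smt (verit) sum_squares_bound power2_sum)
    also have "\<dots> \<le> C + C * (z \<bullet> z)"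
      by (simp add: C_def power2_norm_eq_inner[symmetric] power_mult_distrib algebra_simps)
    finally show ?thesis .
  qed
  have "(\<integral>\<^sup>+z. ennreal (stdg z / \<bar>det L\<bar> * (norm (mu0 + L *v z))^2) \<partial>lborel)
      \<le> (\<integral>\<^sup>+z. ennreal (C / \<bar>det L\<bar>) * ennreal (stdg (z::real^'d)) + ennreal (C / \<bar>det L\<bar>) * ennreal (stdg z * (z \<bullet> z)) \<partial>lborel)"
  proof (intro nn_integral_mono)
    fix z :: "real^'d"
    have "stdg z / \<bar>det L\<bar> * (norm (mu0 + L *v z))^2 \<le> stdg z / \<bar>det L\<bar> * (C + C * (z \<bullet> z))"
      using bound[of z] stdg_nonneg[of z] by (intro mult_left_mono) auto
    also have "\<dots> = C / \<bar>det L\<bar> * stdg z + C / \<bar>det L\<bar> * (stdg z * (z \<bullet> z))"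
      by (simp add: algebra_simps)
    finally show "ennreal (stdg z / \<bar>det L\<bar> * (norm (mu0 + L *v z))^2)
       \<le> ennreal (C / \<bar>det L\<bar>) * ennreal (stdg z) + ennreal (C / \<bar>det L\<bar>) * ennreal (stdg z * (z \<bullet> z))"
      using stdg_nonneg[of z] K(1) by (simp add: C_def ennreal_mult'[symmetric] ennreal_plus[symmetric] del: ennreal_plus)
  qed
  also have "\<dots> = ennreal (C / \<bar>det L\<bar>) * (\<integral>\<^sup>+z. ennreal (stdg (z::real^'d)) \<partial>lborel)
       + ennreal (C / \<bar>det L\<bar>) * (\<integral>\<^sup>+z. ennreal (stdg (z::real^'d) * (z \<bullet> z)) \<partial>lborel)"
    by (subst nn_integral_add) (auto simp: nn_integral_cmult)
  also have "\<dots> < \<infinity>"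
    using nn_stdg_sq[where 'n='d] by (simp add: nn_stdg ennreal_mult_less_top)
  finally have fin: "(\<integral>\<^sup>+z. ennreal (stdg z / \<bar>det L\<bar> * (norm (mu0 + L *v z))^2) \<partial>lborel) < \<infinity>" .
  have eq: "(\<integral>\<^sup>+x. ennreal (gauss_density mu0 S x * (norm x)^2) \<partial>lborel)
      = ennreal \<bar>det L\<bar> * (\<integral>\<^sup>+z. ennreal (stdg z / \<bar>det L\<bar> * (norm (mu0 + L *v z))^2) \<partial>lborel)"
    by (subst nn_integral_affine_cov[OF dL, of _ mu0]) (auto simp: g)
  show ?thesis unfolding eq using fin by (simp add: ennreal_mult_less_top)
qed


lemma P0_prob:
  assumes "pos_def_mat (S :: real^'d::finite^'d)"
  shows "prob_space (density lborel (\<lambda>x. ennreal (gauss_density mu0 S x)))"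
proof
  show "emeasure (density lborel (\<lambda>x. ennreal (gauss_density mu0 S x))) (space (density lborel (\<lambda>x. ennreal (gauss_density mu0 S x)))) = 1"
    using gauss_total[OF assms, of mu0] by (simp add: emeasure_density)
qed

lemma P0_sq:
  assumes "pos_def_mat (S :: real^'d::finite^'d)"
  shows "integrable (density lborel (\<lambda>x. ennreal (gauss_density mu0 S x))) (\<lambda>x. (norm x)^2)"
proof -
  have "(\<integral>\<^sup>+x. ennreal (norm ((norm x)^2)) \<partial>density lborel (\<lambda>x. ennreal (gauss_density mu0 S x)))
      = (\<integral>\<^sup>+x. ennreal (gauss_density mu0 S x) * ennreal ((norm x)^2) \<partial>lborel)"
    by (subst nn_integral_density) auto
  also have "\<dots> = (\<integral>\<^sup>+x. ennreal (gauss_density mu0 S x * (norm x)^2) \<partial>lborel)"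
    using gauss_nonneg[OF assms] by (simp add: ennreal_mult')
  also have "\<dots> < \<infinity>" by (rule gauss_second[OF assms])
  finally show ?thesis by (subst integrable_iff_bounded) auto
qed

lemma norm_le_sq: "(a::real) \<le> 1 + a^2"
proof -
  have "0 \<le> (a - 1)^2" by simp
  then have "0 \<le> a^2 - 2 * a + 1" by (simp add: power2_diff)
  moreover have "0 \<le> a^2" by simp
  ultimately show ?thesis by linarith
qed

lemma P0_1:
  assumes "pos_def_mat (S :: real^'d::finite^'d)"
  shows "integrable (density lborel (\<lambda>x. ennreal (gauss_density mu0 S x))) (\<lambda>x. norm x)"
proof -
  interpret prob_space "density lborel (\<lambda>x. ennreal (gauss_density mu0 S x))" by (rule P0_prob[OF assms])
  have int: "integrable (density lborel (\<lambda>x. ennreal (gauss_density mu0 S x))) (\<lambda>x. 1 + (norm x)^2)"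
    using P0_sq[OF assms] by auto
  have ae: "AE x in density lborel (\<lambda>x. ennreal (gauss_density mu0 S x)). norm (norm x) \<le> norm (1 + (norm x)^2)"
    using norm_le_sq by (auto simp: add_nonneg_nonneg)
  have m: "(\<lambda>x::real^'d. norm x) \<in> borel_measurable (density lborel (\<lambda>x. ennreal (gauss_density mu0 S x)))"
    by measurable
  show ?thesis by (rule Bochner_Integration.integrable_bound[OF int m ae])
qed

lemma comp_int:
  fixes S :: "real^'d::finite^'d" and f :: "real^'d \<Rightarrow> 'b::{banach, second_countable_topology}"
  assumes "pos_def_mat S" "i \<in> {1..N}"
    and "integrable (density lborel (\<lambda>x. ennreal (gauss_density mu0 S x))) f"
  shows "integrable (ref_samples N mu0 S) (\<lambda>X. f (X i))"
proof -
  let ?P = "density lborel (\<lambda>x. ennreal (gauss_density mu0 S x))"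
  have d: "distr (ref_samples N mu0 S) ?P (\<lambda>X. X i) = ?P"
    unfolding ref_samples_def using P0_prob[OF assms(1)] assms(2)
    by (intro distr_PiM_component) auto
  have m: "(\<lambda>X. X i) \<in> measurable (ref_samples N mu0 S) ?P"
    unfolding ref_samples_def using assms(2) by (rule measurable_component_singleton)
  show ?thesis using assms(3) d by (intro integrable_distr[OF m]) simp
qed

lemma M_prob: "pos_def_mat S \<Longrightarrow> prob_space (ref_samples N mu0 S)"
  unfolding ref_samples_def by (intro prob_space_PiM P0_prob)

lemma c_pos: "(t::real) > 0 \<Longrightarrow> 1 - exp (-2*t) > 0"
  by simp

lemma ou_pos:
  assumes "t > 0"
  shows "ou_kernel t (y::real^'d::finite) x > 0"
proof -
  have c: "1 - exp(-2*t) > 0" using assms by simp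
  have pd: "pos_def_mat ((1 - exp(-2*t)) *\<^sub>R mat 1 :: real^'d^'d)"
    unfolding pos_def_mat_def using c by (auto simp: transpose_scalar scaleR_matrix_vector_assoc[symmetric])
  have "det ((1 - exp(-2*t)) *\<^sub>R mat 1 :: real^'d^'d) > 0" by (rule det_pos[OF pd])
  then show ?thesis unfolding ou_kernel_def gauss_density_def by simp
qed

lemma W_pos: "t > 0 \<Longrightarrow> (N::nat) \<ge> 1 \<Longrightarrow> (\<Sum>j\<in>{1..N}. ou_kernel t (y::real^'d::finite) (X j)) > 0"
  by (intro sum_pos) (auto simp: ou_pos)

lemma sum_w: "t > 0 \<Longrightarrow> N \<ge> 1 \<Longrightarrow> (\<Sum>i\<in>{1..N}. snis_weight t (y::real^'d::finite) N X i) = 1"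
  unfolding snis_weight_def using W_pos[of t N y X] by (simp add: sum_divide_distrib[symmetric])

lemma w_nonneg: "t > 0 \<Longrightarrow> N \<ge> 1 \<Longrightarrow> snis_weight t (y::real^'d::finite) N X i \<ge> 0"
  unfolding snis_weight_def using W_pos[of t N y X] ou_pos[of t y "X i"] by simp

lemma w_le1: "t > 0 \<Longrightarrow> N \<ge> 1 \<Longrightarrow> i \<in> {1..N} \<Longrightarrow> snis_weight t (y::real^'d::finite) N X i \<le> 1"
proof -
  assume a: "t > 0" "N \<ge> 1" "i \<in> {1..N}"
  have "ou_kernel t y (X i) \<le> (\<Sum>j\<in>{1..N}. ou_kernel t y (X j))"
    using a by (intro member_le_sum) (auto simp: ou_pos less_imp_le)
  then show ?thesis unfolding snis_weight_def using W_pos[of t N y X] a by simp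
qed

lemma s_TSI_eq:
  assumes "t > 0" "N \<ge> 1"
  shows "s_TSI mu0 S t (y::real^'d::finite) N X = - exp t *\<^sub>R (matrix_inv S *v (mu_SNIS t y N X - mu0))"
proof -
  have a: "(\<Sum>i\<in>{1..N}. snis_weight t y N X i *\<^sub>R gauss_score mu0 S (X i))
      = - (matrix_inv S *v (\<Sum>i\<in>{1..N}. snis_weight t y N X i *\<^sub>R (X i - mu0)))"
    by (simp add: gauss_score_def mv_sum matrix_vector_mult_scaleR sum_negf)
  have b: "(\<Sum>i\<in>{1..N}. snis_weight t y N X i *\<^sub>R (X i - mu0)) = mu_SNIS t y N X - mu0"
    using sum_w[OF assms, of y X]
    by (simp add: mu_SNIS_def scaleR_diff_right sum_subtractf scaleR_sum_left[symmetric])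
  show ?thesis unfolding s_TSI_def a b by simp
qed

lemma s_TWD_eq:
  assumes "t > 0" "N \<ge> 1"
  shows "s_TWD t (y::real^'d::finite) N X = - (1 / (1 - exp (-2*t))) *\<^sub>R (y - exp (-t) *\<^sub>R mu_SNIS t y N X)"
proof -
  have b: "(\<Sum>i\<in>{1..N}. snis_weight t y N X i *\<^sub>R (y - exp (-t) *\<^sub>R X i)) = y - exp (-t) *\<^sub>R mu_SNIS t y N X"
    using sum_w[OF assms, of y X]
    by (simp add: mu_SNIS_def scaleR_diff_right sum_subtractf scaleR_sum_left[symmetric] scaleR_sum_right mult.commute)
  show ?thesis unfolding s_TWD_def b ..
qed

lemma mu_norm:
  assumes "t > 0" "N \<ge> 1"
  shows "norm (mu_SNIS t (y::real^'d::finite) N X) \<le> (\<Sum>i\<in>{1..N}. norm (X i))"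
proof -
  have "norm (mu_SNIS t y N X) \<le> (\<Sum>i\<in>{1..N}. norm (snis_weight t y N X i *\<^sub>R X i))"
    unfolding mu_SNIS_def by (rule norm_sum)
  also have "\<dots> \<le> (\<Sum>i\<in>{1..N}. norm (X i))"
  proof (intro sum_mono)
    fix i assume i: "i \<in> {1..N}"
    have "norm (snis_weight t y N X i *\<^sub>R X i) = snis_weight t y N X i * norm (X i)"
      using w_nonneg[OF assms, of y X i] by simp
    also have "\<dots> \<le> 1 * norm (X i)"
      using w_le1[OF assms i] by (intro mult_right_mono) auto
    finally show "norm (snis_weight t y N X i *\<^sub>R X i) \<le> norm (X i)" by simp
  qed
  finally show ?thesis .
qed

lemma mu_norm_sq:
  assumes "t > 0" "N \<ge> 1"
  shows "(norm (mu_SNIS t (y::real^'d::finite) N X))^2 \<le> (\<Sum>i\<in>{1..N}. (norm (X i))^2)"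
proof -
  define R where "R = sqrt (\<Sum>i\<in>{1..N}. (norm (X i))^2)"
  have R0: "R \<ge> 0" unfolding R_def by (simp add: sum_nonneg)
  have XR: "norm (X i) \<le> R" if "i \<in> {1..N}" for i
  proof -
    have "(norm (X i))^2 \<le> (\<Sum>i\<in>{1..N}. (norm (X i))^2)"
      using that by (intro member_le_sum) auto
    then show ?thesis unfolding R_def by (simp add: real_le_rsqrt)
  qed
  have "norm (mu_SNIS t y N X) \<le> (\<Sum>i\<in>{1..N}. norm (snis_weight t y N X i *\<^sub>R X i))"
    unfolding mu_SNIS_def by (rule norm_sum)
  also have "\<dots> \<le> (\<Sum>i\<in>{1..N}. snis_weight t y N X i * R)"
  proof (intro sum_mono)
    fix i assume i: "i \<in> {1..N}"
    show "norm (snis_weight t y N X i *\<^sub>R X i) \<le> snis_weight t y N X i * R"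
      using w_nonneg[OF assms, of y X i] XR[OF i] by (simp add: mult_left_mono)
  qed
  also have "\<dots> = R" using sum_w[OF assms, of y X] by (simp add: sum_distrib_right[symmetric])
  finally have "norm (mu_SNIS t y N X) \<le> R" .
  then have "(norm (mu_SNIS t y N X))^2 \<le> R^2" by (intro power_mono) auto
  also have "R^2 = (\<Sum>i\<in>{1..N}. (norm (X i))^2)" unfolding R_def by (simp add: sum_nonneg)
  finally show ?thesis .
qed

lemma ou_meas[measurable]: "(\<lambda>x. ou_kernel t (y::real^'d::finite) x) \<in> borel_measurable borel"
  unfolding ou_kernel_def gauss_density_def by measurable

lemma mu_meas[measurable]: "mu_SNIS t (y::real^'d::finite) N \<in> borel_measurable (ref_samples N mu0 S)"
  unfolding mu_SNIS_def snis_weight_def ref_samples_def by measurable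


lemma vec_nth_meas[measurable]:
  "f \<in> borel_measurable M \<Longrightarrow> (\<lambda>x. (f x :: real^'n::finite) $ i) \<in> borel_measurable M"
proof -
  assume f: "f \<in> borel_measurable M"
  have "(\<lambda>z::real^'n. z $ i) \<in> borel_measurable borel"
    by (intro borel_measurable_continuous_onI linear_continuous_on bounded_linear_vec_nth)
  from measurable_compose[OF f this] show ?thesis by (simp add: o_def)
qed

lemma integrable_quad:
  fixes D :: "'a \<Rightarrow> real^'n::finite" and h :: "real^'n \<Rightarrow> real"
  assumes "integrable M (\<lambda>w. (norm (D w))^2)" "(\<lambda>w. h (D w)) \<in> borel_measurable M"
    "\<And>x. \<bar>h x\<bar> \<le> K * (norm x)^2"
  shows "integrable M (\<lambda>w. h (D w))"
proof -
  have i: "integrable M (\<lambda>w. K * (norm (D w))^2)" using assms(1) by simp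
  have ae: "AE w in M. norm (h (D w)) \<le> norm (K * (norm (D w))^2)"
    using assms(3) by (auto intro: order_trans[OF _ abs_ge_self])
  show ?thesis by (rule Bochner_Integration.integrable_bound[OF i assms(2) ae])
qed

theorem proposition3p2:
  fixes S :: "real^'d^'d" and mu0 y :: "real^'d" and t :: real and N :: nat
  assumes "pos_def_mat S" and "t > 0" and "N \<ge> 1"
  defines "M \<equiv> ref_samples N mu0 S"
  defines "Delta \<equiv> (\<lambda>X. mu_SNIS t y N X - (\<integral>Z. mu_SNIS t y N Z \<partial>M))"
  defines "epsC \<equiv> (\<lambda>X. s_TSI mu0 S t y N X - (\<integral>Z. s_TSI mu0 S t y N Z \<partial>M))"
  defines "epsT \<equiv> (\<lambda>X. s_TWD t y N X - (\<integral>Z. s_TWD t y N Z \<partial>M))"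
  shows "integrable M (mu_SNIS t y N) \<and> integrable M (s_TSI mu0 S t y N)
           \<and> integrable M (s_TWD t y N)
         \<and> (\<forall>X\<in>space M. epsC X = - exp t *\<^sub>R (matrix_inv S *v Delta X))
         \<and> (\<forall>X\<in>space M. epsT X = (exp (-t) / (1 - exp (-2*t))) *\<^sub>R Delta X)
         \<and> trace (cross_cov M epsC epsT) = (\<integral>X. epsT X \<bullet> epsC X \<partial>M)
         \<and> (\<integral>X. epsT X \<bullet> epsC X \<partial>M)
               = - (1 / (1 - exp (-2*t))) * (\<integral>X. Delta X \<bullet> (matrix_inv S *v Delta X) \<partial>M)
         \<and> - (1 / (1 - exp (-2*t))) * (\<integral>X. Delta X \<bullet> (matrix_inv S *v Delta X) \<partial>M) \<le> 0
         \<and> ((- (1 / (1 - exp (-2*t))) * (\<integral>X. Delta X \<bullet> (matrix_inv S *v Delta X) \<partial>M) = 0)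
               \<longleftrightarrow> (AE X in M. Delta X = 0))"
proof -
  define A where "A = matrix_inv S"
  define c where "c = 1 - exp (-2*t)"
  have cpos: "c > 0" using c_pos[OF assms(2)] c_def by simp
  interpret P: prob_space M unfolding M_def by (rule M_prob[OF assms(1)])
  have symA: "transpose A = A" using posdef_facts(3)[OF assms(1)] A_def by simp
  have pdA: "\<And>x. x \<noteq> 0 \<Longrightarrow> x \<bullet> (A *v x) > 0" using posdef_facts(4)[OF assms(1)] A_def by simp
  have nnA: "\<And>x. x \<bullet> (A *v x) \<ge> 0" using posdef_facts(6)[OF assms(1)] A_def by simp
  have sT: "s_TSI mu0 S t y N = (\<lambda>X. - exp t *\<^sub>R (A *v (mu_SNIS t y N X - mu0)))"
    by (intro ext) (simp add: s_TSI_eq[OF assms(2,3)] A_def)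
  have sW: "s_TWD t y N = (\<lambda>X. - (1 / c) *\<^sub>R (y - exp (-t) *\<^sub>R mu_SNIS t y N X))"
    by (intro ext) (simp add: s_TWD_eq[OF assms(2,3)] c_def)
  have mu_m[measurable]: "mu_SNIS t y N \<in> borel_measurable M" unfolding M_def by (rule mu_meas)
  have intXn: "integrable M (\<lambda>X. norm (X i))" if "i \<in> {1..N}" for i
    unfolding M_def using comp_int[OF assms(1) that P0_1[OF assms(1)]] by simp
  have intXsq: "integrable M (\<lambda>X. (norm (X i))^2)" if "i \<in> {1..N}" for i
    unfolding M_def using comp_int[OF assms(1) that P0_sq[OF assms(1)]] by simp
  have mu_int: "integrable M (mu_SNIS t y N)"
  proof -
    have i: "integrable M (\<lambda>X. \<Sum>i\<in>{1..N}. norm (X i))" using intXn by auto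
    have ae: "AE X in M. norm (mu_SNIS t y N X) \<le> norm (\<Sum>i\<in>{1..N}. norm (X i))"
      using mu_norm[OF assms(2,3)] by (auto intro: order_trans[OF _ abs_ge_self])
    show ?thesis by (rule Bochner_Integration.integrable_bound[OF i mu_m ae])
  qed
  define E where "E = (\<integral>Z. mu_SNIS t y N Z \<partial>M)"
  have Delta_eq: "Delta = (\<lambda>X. mu_SNIS t y N X - E)" using Delta_def E_def by simp
  have int_sT: "integrable M (s_TSI mu0 S t y N)"
    unfolding sT using mu_int by (intro integrable_scaleR_right integrable_bounded_linear[OF matrix_vector_mul_bounded_linear]) auto
  have int_sW: "integrable M (s_TWD t y N)"
    unfolding sW using mu_int by (intro integrable_scaleR_right) auto
  have I_sT: "(\<integral>Z. s_TSI mu0 S t y N Z \<partial>M) = - exp t *\<^sub>R (A *v (E - mu0))"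
  proof -
    have "(\<integral>Z. A *v (mu_SNIS t y N Z - mu0) \<partial>M) = A *v (\<integral>Z. mu_SNIS t y N Z - mu0 \<partial>M)"
      using mu_int by (intro integral_bounded_linear[OF matrix_vector_mul_bounded_linear]) auto
    also have "(\<integral>Z. mu_SNIS t y N Z - mu0 \<partial>M) = E - mu0"
      using mu_int by (simp add: E_def P.prob_space)
    finally show ?thesis unfolding sT by simp
  qed
  have I_sW: "(\<integral>Z. s_TWD t y N Z \<partial>M) = - (1 / c) *\<^sub>R (y - exp (-t) *\<^sub>R E)"
    unfolding sW using mu_int by (simp add: E_def P.prob_space)
  have epsC_eq: "epsC = (\<lambda>X. - exp t *\<^sub>R (A *v Delta X))"
    unfolding epsC_def I_sT unfolding sT Delta_eq by (auto simp: algebra_simps)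
  have epsT_eq: "epsT = (\<lambda>X. (exp (-t) / c) *\<^sub>R Delta X)"
    unfolding epsT_def I_sW unfolding sW Delta_eq using cpos by (auto simp: algebra_simps)
  have Delta_m[measurable]: "Delta \<in> borel_measurable M" unfolding Delta_eq by measurable
  have int_D2: "integrable M (\<lambda>X. (norm (Delta X))^2)"
  proof -
    have i: "integrable M (\<lambda>X. 2 * (\<Sum>i\<in>{1..N}. (norm (X i))^2) + 2 * (norm E)^2)"
    proof -
      have "integrable M (\<lambda>X. \<Sum>i\<in>{1..N}. (norm (X i))^2)" by (rule Bochner_Integration.integrable_sum) (rule intXsq)
      then show ?thesis by (intro Bochner_Integration.integrable_add Bochner_Integration.integrable_mult_right P.integrable_const)
    qed
    have "norm ((norm (Delta X))^2) \<le> norm (2 * (\<Sum>i\<in>{1..N}. (norm (X i))^2) + 2 * (norm E)^2)" for X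
    proof -
      have "norm (Delta X) \<le> norm (mu_SNIS t y N X) + norm E"
        unfolding Delta_eq using norm_triangle_ineq4 by blast
      then have "(norm (Delta X))^2 \<le> (norm (mu_SNIS t y N X) + norm E)^2" by (intro power_mono) auto
      also have "\<dots> \<le> 2 * (norm (mu_SNIS t y N X))^2 + 2 * (norm E)^2"
        by (smt (verit) sum_squares_bound power2_sum)
      also have "\<dots> \<le> 2 * (\<Sum>i\<in>{1..N}. (norm (X i))^2) + 2 * (norm E)^2"
        using mu_norm_sq[OF assms(2,3), of y X] by simp
      finally show ?thesis by (simp add: sum_nonneg)
    qed
    then have ae: "AE X in M. norm ((norm (Delta X))^2) \<le> norm (2 * (\<Sum>i\<in>{1..N}. (norm (X i))^2) + 2 * (norm E)^2)"
      by simp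
    show ?thesis by (rule Bochner_Integration.integrable_bound[OF i _ ae]) measurable
  qed
  obtain KA where KA: "KA > 0" "\<And>x. norm (A *v x) \<le> norm x * KA"
    using bounded_linear.pos_bounded[OF matrix_vector_mul_bounded_linear[of A]] by blast
  have int_q: "integrable M (\<lambda>X. Delta X \<bullet> (A *v Delta X))"
  proof (rule integrable_quad[OF int_D2, where h = "\<lambda>x. x \<bullet> (A *v x)" and K = KA])
    show "(\<lambda>X. Delta X \<bullet> (A *v Delta X)) \<in> borel_measurable M" by measurable
    fix x :: "real^'d"
    have "\<bar>x \<bullet> (A *v x)\<bar> \<le> norm x * norm (A *v x)" by (rule Cauchy_Schwarz_ineq2)
    also have "\<dots> \<le> norm x * (norm x * KA)" using KA(2)[of x] by (intro mult_left_mono) auto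
    finally show "\<bar>x \<bullet> (A *v x)\<bar> \<le> KA * (norm x)^2" by (simp add: power2_eq_square mult_ac)
  qed
  have IDelta: "(\<integral>X. Delta X \<partial>M) = 0"
    unfolding Delta_eq using mu_int by (simp add: E_def P.prob_space)
  have int_lin: "(\<integral>X. T (Delta X) \<partial>M) = 0" if "bounded_linear T" for T :: "real^'d \<Rightarrow> real"
  proof -
    have "(\<integral>X. T (Delta X) \<partial>M) = T (\<integral>X. Delta X \<partial>M)"
      using that int_D2 by (intro integral_bounded_linear) (auto simp: Delta_eq mu_int)
    then show ?thesis using IDelta linear_0[OF bounded_linear.linear[OF that]] by simp
  qed
  have IC: "(\<integral>v. epsC v $ i \<partial>M) = 0" for i
    unfolding epsC_eq
    by (rule int_lin, rule bounded_linear_compose[OF bounded_linear_vec_nth],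
        rule bounded_linear_compose[OF bounded_linear_scaleR_right], rule matrix_vector_mul_bounded_linear)
  have IT: "(\<integral>v. epsT v $ i \<partial>M) = 0" for i
    unfolding epsT_eq
    by (rule int_lin, rule bounded_linear_compose[OF bounded_linear_vec_nth], rule bounded_linear_scaleR_right)
  have int_prod: "integrable M (\<lambda>w. epsC w $ i * epsT w $ i)" for i
  proof -
    have "integrable M (\<lambda>w. (\<lambda>x. ((- exp t) *\<^sub>R (A *v x)) $ i * ((exp (-t) / c) *\<^sub>R x) $ i) (Delta w))"
    proof (rule integrable_quad[OF int_D2, where K = "exp t * KA * \<bar>exp (-t) / c\<bar>"])
      show "(\<lambda>w. (\<lambda>x. ((- exp t) *\<^sub>R (A *v x)) $ i * ((exp (-t) / c) *\<^sub>R x) $ i) (Delta w)) \<in> borel_measurable M"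
        by measurable
      fix x :: "real^'d"
      have "\<bar>((- exp t) *\<^sub>R (A *v x)) $ i\<bar> \<le> exp t * (norm x * KA)"
        using component_le_norm_cart[of "(- exp t) *\<^sub>R (A *v x)" i] KA(2)[of x]
        by (simp add: mult_left_mono order_trans)
      moreover have "\<bar>((exp (-t) / c) *\<^sub>R x) $ i\<bar> \<le> \<bar>exp (-t) / c\<bar> * norm x"
        using component_le_norm_cart[of "(exp (-t) / c) *\<^sub>R x" i] by simp
      ultimately have "\<bar>((- exp t) *\<^sub>R (A *v x)) $ i * ((exp (-t) / c) *\<^sub>R x) $ i\<bar>
          \<le> (exp t * (norm x * KA)) * (\<bar>exp (-t) / c\<bar> * norm x)"
        unfolding abs_mult by (intro mult_mono) auto
      then show "\<bar>((- exp t) *\<^sub>R (A *v x)) $ i * ((exp (-t) / c) *\<^sub>R x) $ i\<bar>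
          \<le> exp t * KA * \<bar>exp (-t) / c\<bar> * (norm x)^2"
        by (simp add: power2_eq_square mult_ac)
    qed
    then show ?thesis unfolding epsC_eq epsT_eq by simp
  qed
  have tr: "trace (cross_cov M epsC epsT) = (\<integral>X. epsT X \<bullet> epsC X \<partial>M)"
  proof -
    have "trace (cross_cov M epsC epsT) = (\<Sum>i\<in>UNIV. \<integral>w. epsC w $ i * epsT w $ i \<partial>M)"
      unfolding trace_def cross_cov_def by (simp add: IC IT)
    also have "\<dots> = (\<integral>w. (\<Sum>i\<in>UNIV. epsC w $ i * epsT w $ i) \<partial>M)"
      by (rule Bochner_Integration.integral_sum[symmetric]) (rule int_prod)
    also have "\<dots> = (\<integral>X. epsT X \<bullet> epsC X \<partial>M)"
      by (simp add: inner_vec_def mult.commute)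
    finally show ?thesis .
  qed
  have ipt: "(\<integral>X. epsT X \<bullet> epsC X \<partial>M) = - (1 / c) * (\<integral>X. Delta X \<bullet> (A *v Delta X) \<partial>M)"
  proof -
    have "epsT X \<bullet> epsC X = - (1 / c) * (Delta X \<bullet> (A *v Delta X))" for X
    proof -
      have "epsT X \<bullet> epsC X = (exp (-t) / c) * (- exp t) * (Delta X \<bullet> (A *v Delta X))"
        unfolding epsC_eq epsT_eq by (simp add: mult_ac)
      also have "(exp (-t) / c) * (- exp t) = - (1 / c)"
        using exp_minus_inverse[of t] by (simp add: field_simps mult_ac)
      finally show ?thesis .
    qed
    then show ?thesis by simp
  qed
  have Iq_nonneg: "(\<integral>X. Delta X \<bullet> (A *v Delta X) \<partial>M) \<ge> 0"
    by (rule Bochner_Integration.integral_nonneg) (rule nnA)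
  have le: "- (1 / c) * (\<integral>X. Delta X \<bullet> (A *v Delta X) \<partial>M) \<le> 0"
    using Iq_nonneg cpos by (simp add: mult_nonneg_nonneg)
  have iff: "(- (1 / c) * (\<integral>X. Delta X \<bullet> (A *v Delta X) \<partial>M) = 0) \<longleftrightarrow> (AE X in M. Delta X = 0)"
  proof -
    have "(- (1 / c) * (\<integral>X. Delta X \<bullet> (A *v Delta X) \<partial>M) = 0) \<longleftrightarrow> (\<integral>X. Delta X \<bullet> (A *v Delta X) \<partial>M) = 0"
      using cpos by simp
    also have "\<dots> \<longleftrightarrow> (AE X in M. Delta X \<bullet> (A *v Delta X) = 0)"
      by (rule Bochner_Integration.integral_nonneg_eq_0_iff_AE[OF int_q]) (simp add: nnA)
    also have "\<dots> \<longleftrightarrow> (AE X in M. Delta X = 0)"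
    proof (rule AE_cong)
      fix X
      show "Delta X \<bullet> (A *v Delta X) = 0 \<longleftrightarrow> Delta X = 0"
      proof
        assume z: "Delta X \<bullet> (A *v Delta X) = 0"
        show "Delta X = 0"
        proof (rule ccontr)
          assume "Delta X \<noteq> 0"
          then have "Delta X \<bullet> (A *v Delta X) > 0" by (rule pdA)
          with z show False by simp
        qed
      next
        assume "Delta X = 0"
        then show "Delta X \<bullet> (A *v Delta X) = 0" by simp
      qed
    qed
    finally show ?thesis .
  qed
  have e1: "\<forall>X\<in>space M. epsC X = - exp t *\<^sub>R (matrix_inv S *v Delta X)"
    unfolding epsC_eq A_def by simp
  have e2: "\<forall>X\<in>space M. epsT X = (exp (-t) / (1 - exp (-2*t))) *\<^sub>R Delta X"
    unfolding epsT_eq c_def by simp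
  show ?thesis
    using mu_int int_sT int_sW e1 e2 tr ipt le iff unfolding A_def c_def by blast
qed

end
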